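(* Let $e\geqslant 1$ be an integer and $b\geqslant 2$ an even integer. Suppose that for every integer $a$ there exists an $(e,b)$-happy number $h$ with $h\equiv a\pmod{(b-1)^e}$. Then for every positive integer $x$ and every $N$, there exists an $(e,b)$-happy number $l>N$ such that $l+x$ is also $(e,b)$-happy.
   Context: For a positive integer $n=\sum_{j=0}^k a_j b^j$ with $0\leqslant a_j<b$, $T_{e,b}(n)=\sum_{j=0}^k a_j^e$; $T_{e,b}^r$ is the $r$-th iterate, $T_{e,b}^0(n)=n$. A positive integer $n$ is $(e,b)$-happy if $T_{e,b}^r(n)=1$ for some $r\geqslant 0$. *)

theory Defs
  imports Main
begin

fun T :: "nat \<Rightarrow> nat \<Rightarrow> nat \<Rightarrow> nat" where
  "T e b n = (if b < 2 \<or> n = 0 then 0 else (n mod b) ^ e + T e b (n div b))"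

definition happy :: "nat \<Rightarrow> nat \<Rightarrow> nat \<Rightarrow> bool" where
  "happy e b n \<longleftrightarrow> n > 0 \<and> (\<exists>r. (T e b ^^ r) n = 1)"

end

theory Submission
  imports Defs "HOL-Number_Theory.Number_Theory"
begin

declare T.simps[simp del]

lemma T0[simp]: "T e b 0 = 0" by (simp add: T.simps)

lemma Tstep: "b \<ge> 2 \<Longrightarrow> n > 0 \<Longrightarrow> T e b n = (n mod b) ^ e + T e b (n div b)"
  by (subst T.simps) simp

lemma Tconcat:
  assumes "b \<ge> 2" "e \<ge> 1"
  shows "c < b ^ K \<Longrightarrow> T e b (A * b ^ K + c) = T e b A + T e b c"
proof (induction K arbitrary: A c)
  case 0 then show ?case by simp
next
  case (Suc K)
  let ?n = "A * b ^ Suc K + c"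
  show ?case
  proof (cases "?n = 0")
    case True then show ?thesis using assms by auto
  next
    case False
    have b0: "b > 0" using assms by simp
    have m: "?n mod b = c mod b"
      by (simp add: mod_add_left_eq[symmetric])
    have d: "?n div b = A * b ^ K + c div b"
      using b0 by (simp add: div_add1_eq mult.commute mult.left_commute)
    have cd: "c div b < b ^ K" using Suc.prems b0
      by (simp add: div_less_iff_less_mult mult.commute)
    have "T e b ?n = (c mod b) ^ e + T e b (A * b ^ K + c div b)"
      using Tstep[OF assms(1), of ?n e] False m d by simp
    also have "\<dots> = (c mod b) ^ e + T e b A + T e b (c div b)"
      using Suc.IH[OF cd] by simp
    also have "\<dots> = T e b A + ((c mod b) ^ e + T e b (c div b))" by simp
    also have "(c mod b) ^ e + T e b (c div b) = T e b c"
    proof (cases "c = 0")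
      case True then show ?thesis using assms by simp
    next
      case False then show ?thesis using Tstep[OF assms(1), of c e] by simp
    qed
    finally show ?thesis by simp
  qed
qed

lemma happy_T: "n > 0 \<Longrightarrow> happy e b (T e b n) \<Longrightarrow> happy e b n"
  unfolding happy_def by (metis funpow_Suc_right o_apply)

lemma T_pow: assumes "b \<ge> 2" "e \<ge> 1" shows "T e b (b ^ j) = 1"
proof -
  have "T e b (1 * b ^ j + 0) = T e b 1 + T e b 0"
    by (rule Tconcat[OF assms]) (use assms in simp)
  moreover have "T e b 1 = 1" using Tstep[OF assms(1), of 1 e] assms by simp
  ultimately show ?thesis by simp
qed

lemma happy_pow: assumes "b \<ge> 2" "e \<ge> 1" shows "happy e b (b ^ j)"
proof -
  have "happy e b 1" unfolding happy_def by (auto intro: exI[of _ 0])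
  then show ?thesis using happy_T[of "b^j" e b] T_pow[OF assms] assms by simp
qed

lemma T_rep: assumes "b \<ge> 2" "e \<ge> 1" "P \<ge> 1"
  shows "T e b (\<Sum>i<k. b ^ (P * i)) = k"
proof (induction k)
  case 0 then show ?case by simp
next
  case (Suc k)
  have eq: "(\<Sum>i<Suc k. b ^ (P * i)) = (\<Sum>i<k. b ^ (P * i)) * b ^ P + 1"
    by (simp only: sum.lessThan_Suc_shift)
       (simp add: sum_distrib_left sum_distrib_right power_add algebra_simps flip: power_mult)
  have "1 < b ^ P" using assms by (intro one_less_power) auto
  then have "T e b ((\<Sum>i<k. b ^ (P * i)) * b ^ P + 1) = T e b (\<Sum>i<k. b ^ (P * i)) + T e b 1"
    by (rule Tconcat[OF assms(1,2)])
  then have "T e b ((\<Sum>i<k. b ^ (P * i)) * b ^ P + 1) = k + T e b 1"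
    using Suc by simp
  moreover have "T e b 1 = 1" using Tstep[OF assms(1), of 1 e] assms by simp
  ultimately show ?case using eq by simp
qed

lemma rep_mod: assumes "b ^ P mod q = 1 mod q"
  shows "(\<Sum>i<k. b ^ (P * i)) mod q = k mod q"
proof (induction k)
  case 0 then show ?case by simp
next
  case (Suc k)
  have sumeq: "(\<Sum>i<Suc k. b ^ (P * i)) = (\<Sum>i<k. b ^ (P * i)) + (b ^ P) ^ k"
    by (simp add: power_mult)
  have "(b ^ P) ^ k mod q = 1 mod q"
  proof -
    have "(b ^ P) ^ k mod q = ((b ^ P) mod q) ^ k mod q" by (simp add: power_mod)
    also have "\<dots> = (1 mod q) ^ k mod q" using assms by simp
    also have "\<dots> = 1 mod q" by (simp add: power_mod)
    finally show ?thesis .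
  qed
  have "(\<Sum>i<Suc k. b ^ (P * i)) mod q
      = ((\<Sum>i<k. b ^ (P * i)) mod q + (b ^ P) ^ k mod q) mod q"
    unfolding sumeq by (rule mod_add_eq[symmetric])
  also have "\<dots> = (k mod q + 1 mod q) mod q" using Suc.IH \<open>(b ^ P) ^ k mod q = 1 mod q\<close> by simp
  also have "\<dots> = (k + 1) mod q" by (rule mod_add_eq)
  also have "\<dots> = Suc k mod q" by simp
  finally show ?case .
qed

lemma T_allmax: assumes "b \<ge> 2" "e \<ge> 1"
  shows "T e b (b ^ m - 1) = m * (b - 1) ^ e"
proof (induction m)
  case 0 then show ?case by simp
next
  case (Suc m)
  have "b ^ m \<ge> 1" using assms by simp
  then obtain k where k: "b ^ m = Suc k" by (cases "b ^ m") auto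
  obtain c where c: "b = Suc c" using assms by (cases b) auto
  have eq: "b ^ Suc m - 1 = (b ^ m - 1) * b ^ 1 + (b - 1)"
    using k c by simp
  have "T e b (b - 1) = (b - 1) ^ e" using Tstep[OF assms(1), of "b - 1" e] assms by simp
  moreover have "T e b (b ^ Suc m - 1) = T e b (b ^ m - 1) + T e b (b - 1)"
    unfolding eq by (rule Tconcat[OF assms]) (use assms in simp)
  ultimately show ?case using Suc.IH by simp
qed

lemma T_one: "b \<ge> 2 \<Longrightarrow> T e b 1 = 1"
  using Tstep[of b 1 e] by simp

lemma big_class:
  assumes b: "b \<ge> 2" and e: "e \<ge> 1"
    and hyp: "\<forall>c::nat. \<exists>h. happy e b h \<and> h mod ((b-1)^e) = c mod ((b-1)^e)"
  shows "\<exists>H \<ge> B. happy e b H \<and> H mod ((b-1)^e) = c mod ((b-1)^e)"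
proof -
  define q where "q = (b-1)^e"
  obtain h where h: "happy e b h" "h mod q = c mod q" using hyp unfolding q_def[symmetric] by blast
  have hpos: "h > 0" using h(1) unfolding happy_def by simp
  define P where "P = totient q"
  have qpos: "q > 0" using b unfolding q_def by simp
  have P1: "P \<ge> 1" using qpos unfolding P_def by (simp add: Suc_le_eq)
  obtain b' where b': "b = Suc b'" using b by (cases b) auto
  have cop1: "coprime b (b - 1)" using b' by simp
  have cop: "coprime b q" unfolding q_def using cop1 by simp
  have bP: "b ^ P mod q = 1 mod q"
    using euler_theorem[OF cop] unfolding P_def cong_def by simp
  define R where "R = (\<Sum>i<h. b ^ (P * i))"
  define H where "H = R * b ^ (P * B) + 0"
  have TR: "T e b R = h" unfolding R_def using T_rep[OF b e P1] .
  have TH: "T e b H = h" unfolding H_def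
    using Tconcat[OF b e, of 0 "P * B" R] TR b by simp
  have R1: "R \<ge> 1" unfolding R_def
    using member_le_sum[of 0 "{..<h}" "\<lambda>i. b ^ (P * i)"] hpos by simp
  have "B < 2 ^ B" by (rule less_exp)
  also have "\<dots> \<le> b ^ B" by (rule power_mono) (use b in auto)
  also have "\<dots> \<le> b ^ (P * B)" using b P1 by (intro power_increasing) auto
  also have "\<dots> \<le> H" unfolding H_def using R1 by simp
  finally have HB: "B \<le> H" by simp
  have "H mod q = (R mod q) * ((b ^ P) ^ B mod q) mod q"
    unfolding H_def by (simp add: mod_mult_eq power_mult)
  also have "(b ^ P) ^ B mod q = 1 mod q"
  proof -
    have "(b ^ P) ^ B mod q = ((b ^ P) mod q) ^ B mod q" by (simp add: power_mod)
    also have "\<dots> = (1 mod q) ^ B mod q" using bP by simp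
    also have "\<dots> = 1 mod q" by (simp add: power_mod)
    finally show ?thesis .
  qed
  also have "R mod q = h mod q" unfolding R_def using rep_mod[OF bP] .
  finally have "H mod q = c mod q" using h(2) by (simp add: mod_mult_eq)
  moreover have Hpos: "H > 0" unfolding H_def using R1 b by simp
  then have "happy e b H" using happy_T[OF Hpos] TH h(1) by simp
  ultimately show ?thesis unfolding q_def[symmetric] using HB by blast
qed

theorem lemma2p3:
  fixes e b :: nat
  assumes "e \<ge> 1" and "b \<ge> 2" and "even b"
    and "\<forall>a::int. \<exists>h. happy e b h \<and> int h mod ((int b - 1) ^ e) = a mod ((int b - 1) ^ e)"
  shows "\<forall>(x::nat) > 0. \<forall>N::nat. \<exists>l. l > N \<and> happy e b l \<and> happy e b (l + x)"
proof (intro allI impI)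
  fix x N :: nat
  assume x: "x > 0"
  note b = assms(2) and e = assms(1)
  define q where "q = (b-1)^e"
  have qpos: "q > 0" using b unfolding q_def by simp
  have iq: "(int b - 1) ^ e = int q" unfolding q_def using b by (simp add: of_nat_diff)
  have hyp: "\<forall>c::nat. \<exists>h. happy e b h \<and> h mod ((b-1)^e) = c mod ((b-1)^e)"
  proof
    fix c :: nat
    have "\<exists>h. happy e b h \<and> int h mod (int b - 1) ^ e = int c mod (int b - 1) ^ e"
      using assms(4) by (rule spec)
    then obtain h where h1: "happy e b h"
      and h2: "int h mod (int b - 1) ^ e = int c mod (int b - 1) ^ e"
      by (elim exE conjE)
    have "int (h mod q) = int (c mod q)" unfolding zmod_int using h2 iq by simp
    then have "h mod q = c mod q" by (rule of_nat_eq_iff[THEN iffD1])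
    then show "\<exists>h. happy e b h \<and> h mod ((b-1)^e) = c mod ((b-1)^e)"
      unfolding q_def[symmetric] using h1 by blast
  qed
  define t where "t = T e b (x - 1)"
  define H2 where "H2 = b ^ Suc t"
  have "Suc t < 2 ^ Suc t" by (rule less_exp)
  also have "\<dots> \<le> H2" unfolding H2_def by (rule power_mono) (use b in auto)
  finally have H2t: "Suc t < H2" .
  define k where "k = H2 - 1 - t"
  define m0 where "m0 = N + x"
  obtain H1 where H1: "H1 \<ge> k + q * m0" "happy e b H1" "H1 mod q = k mod q"
    using big_class[OF b e hyp, of "k + q * m0" k] unfolding q_def[symmetric] by blast
  have "q dvd (H1 - k)" using H1 by (simp add: mod_eq_dvd_iff_nat)
  then obtain m where m: "H1 - k = q * m" by blast
  have "q * m0 \<le> q * m" using m H1(1) by linarith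
  then have mm0: "m \<ge> m0" using qpos by simp
  have H1eq: "H1 = k + m * q" using m H1(1) by (simp add: algebra_simps)
  have "m0 < 2 ^ m0" by (rule less_exp)
  also have "\<dots> \<le> b ^ m0" by (rule power_mono) (use b in auto)
  also have "\<dots> \<le> b ^ m" using b mm0 by (intro power_increasing) auto
  finally have bm: "N + x < b ^ m" unfolding m0_def .
  define A where "A = (\<Sum>i<k. b ^ (1 * i))"
  have TA: "T e b A = k" unfolding A_def using T_rep[OF b e, of 1] by simp
  define l where "l = A * b ^ Suc m + (b ^ m - 1)"
  have bSm: "b ^ Suc m = b * b ^ m" by simp
  have bmpos: "b ^ m > 0" using b by simp
  have b2m: "2 * b ^ m \<le> b ^ Suc m" using b by simp
  have lt1: "b ^ m - 1 < b ^ Suc m" using bmpos b2m by linarith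
  have "T e b l = T e b A + T e b (b ^ m - 1)" unfolding l_def by (rule Tconcat[OF b e lt1])
  also have "\<dots> = k + m * q" unfolding TA T_allmax[OF b e] q_def by (rule refl)
  also have "\<dots> = H1" using H1eq by (rule sym)
  finally have Tl: "T e b l = H1" .
  have lx: "l + x = A * b ^ Suc m + (1 * b ^ m + (x - 1))" unfolding l_def using x bmpos by linarith
  have lt2: "1 * b ^ m + (x - 1) < b ^ Suc m" using bm b2m by linarith
  have xlt: "x - 1 < b ^ m" using bm by linarith
  have "T e b (1 * b ^ m + (x - 1)) = T e b 1 + T e b (x - 1)" by (rule Tconcat[OF b e xlt])
  also have "\<dots> = 1 + t" unfolding T_one[OF b] t_def by (rule refl)
  finally have Tm: "T e b (1 * b ^ m + (x - 1)) = 1 + t" .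
  have "T e b (l + x) = T e b A + T e b (1 * b ^ m + (x - 1))" unfolding lx by (rule Tconcat[OF b e lt2])
  also have "\<dots> = k + (1 + t)" unfolding TA Tm by (rule refl)
  also have "\<dots> = H2" using H2t unfolding k_def by linarith
  finally have Tlx: "T e b (l + x) = H2" .
  have "b ^ m - 1 \<le> l" unfolding l_def by (rule le_add2)
  then have lN: "l > N" using bm x by linarith
  have l0: "l > 0" using lN by linarith
  have l0': "l + x > 0" using lN by linarith
  have "happy e b (T e b l)" using H1(2) Tl by simp
  then have "happy e b l" by (rule happy_T[OF l0])
  moreover have "happy e b (T e b (l + x))" using happy_pow[OF b e, of "Suc t"] Tlx H2_def by simp
  then have "happy e b (l + x)" by (rule happy_T[OF l0'])
  ultimately show "\<exists>l. l > N \<and> happy e b l \<and> happy e b (l + x)" using lN by blast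
qed

end
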